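(* For all real numbers $a,b,c>0$, \[ \frac{abc(a+b+c)^3}{3(ab+bc+ca)(a^3c+ab^3+bc^3)}\leq 1. \] *)

theory Defs
  imports Complex_Main
begin

end

theory Submission
  imports Defs
begin

lemma aux:
  fixes a b c :: real
  assumes "a > 0" and "b > 0" and "c > 0"
  shows "a * b * c * (a + b + c) ^ 3 \<le> 3 * (a * b + b * c + c * a) * (a ^ 3 * c + a * b ^ 3 + b * c ^ 3)"
proof -
  have e: "3 * (a * b + b * c + c * a) * (a ^ 3 * c + a * b ^ 3 + b * c ^ 3) - a * b * c * (a + b + c) ^ 3
     = 3/2 * ((a*b^2 - b*c^2)^2 + (b*c^2 - c*a^2)^2 + (c*a^2 - a*b^2)^2)
       + a*b*c*(a+b+c)*((a-b)^2+(b-c)^2+(c-a)^2)"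
    by (simp add: algebra_simps power2_eq_square power3_eq_cube)
  have "0 \<le> a*b*c*(a+b+c)*((a-b)^2+(b-c)^2+(c-a)^2)"
    using assms by (intro mult_nonneg_nonneg) auto
  moreover have "0 \<le> 3/2 * ((a*b^2 - b*c^2)^2 + (b*c^2 - c*a^2)^2 + (c*a^2 - a*b^2)^2)"
    by simp
  ultimately show ?thesis using e by linarith
qed

theorem mainTheorem3:
  fixes a b c :: real
  assumes "a > 0" and "b > 0" and "c > 0"
  shows "a * b * c * (a + b + c) ^ 3 / (3 * (a * b + b * c + c * a) * (a ^ 3 * c + a * b ^ 3 + b * c ^ 3)) \<le> 1"
proof -
  have "0 < 3 * (a * b + b * c + c * a) * (a ^ 3 * c + a * b ^ 3 + b * c ^ 3)"
    using assms by (intro mult_pos_pos add_pos_pos) auto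
  then show ?thesis using aux[OF assms] by simp
qed

end
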